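(* Let $G_1, G_2$ be two graphs on the same vertex set $V$. Let $A \subseteq S(G_1) \cap S(G_2)$ and $B\subseteq V$ be such that $N_{G_1}(B) \cup N_{G_2}(B) \subseteq A$. Suppose $E(G_1) \triangle E(G_2) \subseteq \binom{A \cup B}{2}$. Then \[ S(G_1) \setminus B = S(G_2)\setminus B,\quad P(G_1) \setminus B = P(G_2) \setminus B,\quad R(G_1) \setminus B = R(G_2) \setminus B. \] Moreover, for any vertex $w \in V \setminus B$, we have $C_w(G_1) = C_w(G_2) \subseteq V \setminus (A \cup B)$, $G_1[C_w(G_1)] = G_2[C_w(G_2)]$, and $R(G_1) \cap C_w(G_1) = R(G_2) \cap C_w(G_2)$.
   Context: For a graph $G$ and $X\subseteq V(G)$, $N_G(X)=\{x\in V(G)\setminus X: xy\in E(G)\text{ for some }y\in X\}$ and $N_G(x)=N_G(\{x\})$. The strong $4$-core $S(G)$ is the maximal $X\subseteq V(G)$ with $|N_G(x)\cap X|\ge4$ for all $x\in X\cup N_G(X)$; $P(G)=N_G(S(G))$ and $R(G)=V(G)\setminus(S(G)\cup P(G))$. For $w\in P(G)\cup R(G)$, $C_w(G)$ is the vertex set of the connected component of $G[P(G)\cup R(G)]$ containing $w$; for $w\in S(G)$, $C_w(G)=\varnothing$. $\triangle$ denotes symmetric difference. *)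

theory Defs
  imports Main
begin

definition graph :: "'a set \<Rightarrow> 'a set set \<Rightarrow> bool" where
  "graph V E \<longleftrightarrow> finite V \<and> (\<forall>e\<in>E. e \<subseteq> V \<and> card e = 2)"

definition nbhd :: "'a set \<Rightarrow> 'a set set \<Rightarrow> 'a set \<Rightarrow> 'a set" where
  "nbhd V E X = {x \<in> V - X. \<exists>y\<in>X. {x, y} \<in> E}"

definition nbhdv :: "'a set \<Rightarrow> 'a set set \<Rightarrow> 'a \<Rightarrow> 'a set" where
  "nbhdv V E x = nbhd V E {x}"

definition strong4 :: "'a set \<Rightarrow> 'a set set \<Rightarrow> 'a set \<Rightarrow> bool" where
  "strong4 V E X \<longleftrightarrow> X \<subseteq> V \<and>
     (\<forall>x \<in> X \<union> nbhd V E X. card (nbhdv V E x \<inter> X) \<ge> 4)"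

text \<open>The strong 4-core: the maximal such set. The property is closed under unions,
  so the maximal set is the union of all of them.\<close>
definition Score :: "'a set \<Rightarrow> 'a set set \<Rightarrow> 'a set" where
  "Score V E = \<Union>{X. strong4 V E X}"

definition Pset :: "'a set \<Rightarrow> 'a set set \<Rightarrow> 'a set" where
  "Pset V E = nbhd V E (Score V E)"

definition Rset :: "'a set \<Rightarrow> 'a set set \<Rightarrow> 'a set" where
  "Rset V E = V - (Score V E \<union> Pset V E)"

definition adj_in :: "'a set set \<Rightarrow> 'a set \<Rightarrow> 'a \<Rightarrow> 'a \<Rightarrow> bool" where
  "adj_in E U x y \<longleftrightarrow> x \<in> U \<and> y \<in> U \<and> {x, y} \<in> E"

definition Comp :: "'a set \<Rightarrow> 'a set set \<Rightarrow> 'a \<Rightarrow> 'a set" where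
  "Comp V E w = (if w \<in> Pset V E \<union> Rset V E
     then {v. (adj_in E (Pset V E \<union> Rset V E))\<^sup>*\<^sup>* w v}
     else {})"

definition induced :: "'a set set \<Rightarrow> 'a set \<Rightarrow> 'a set set" where
  "induced E C = {e \<in> E. e \<subseteq> C}"

end

theory Submission
  imports Defs
begin

lemma score_sub: "strong4 V E X \<Longrightarrow> X \<subseteq> Score V E"
  unfolding Score_def by blast

lemma score_V: "Score V E \<subseteq> V"
  unfolding Score_def strong4_def by blast

lemma nbhd_mem: "x \<in> nbhd V E X \<longleftrightarrow> x \<in> V \<and> x \<notin> X \<and> (\<exists>y\<in>X. {x, y} \<in> E)"
  unfolding nbhd_def by blast

lemma nbhdv_mem: "v \<in> nbhdv V E x \<longleftrightarrow> v \<in> V \<and> v \<noteq> x \<and> {v, x} \<in> E"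
  unfolding nbhdv_def nbhd_def by blast

lemma score_prop:
  assumes fin: "finite V" and x: "x \<in> Score V E \<union> nbhd V E (Score V E)"
  shows "4 \<le> card (nbhdv V E x \<inter> Score V E)"
proof -
  have f: "finite (nbhdv V E x \<inter> Score V E)"
    using fin score_V[of V E] by (meson finite_subset inf_le2)
  obtain Y where Y: "strong4 V E Y" "x \<in> Y \<union> nbhd V E Y"
  proof (cases "x \<in> Score V E")
    case True
    then obtain Y where "strong4 V E Y" "x \<in> Y" unfolding Score_def by blast
    then show ?thesis using that by blast
  next
    case False
    then obtain y where y: "y \<in> Score V E" "{x, y} \<in> E" "x \<in> V"
      using x False by (auto simp: nbhd_mem)
    then obtain Y where Yd: "strong4 V E Y" "y \<in> Y" unfolding Score_def by blast
    have "x \<notin> Y" using False score_sub[OF Yd(1)] by blast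
    then have "x \<in> nbhd V E Y" using y Yd unfolding nbhd_mem by blast
    then show ?thesis using that Yd by blast
  qed
  have "4 \<le> card (nbhdv V E x \<inter> Y)" using Y unfolding strong4_def by blast
  also have "\<dots> \<le> card (nbhdv V E x \<inter> Score V E)"
    using score_sub[OF Y(1)] f by (intro card_mono) auto
  finally show ?thesis .
qed

lemma core_half:
  assumes fin: "finite V"
    and A1: "A \<subseteq> Score V E1" and A2: "A \<subseteq> Score V E2"
    and N1: "nbhd V E1 B \<subseteq> A" and N2: "nbhd V E2 B \<subseteq> A"
    and D: "\<And>x y. x \<notin> A \<union> B \<Longrightarrow> ({x, y} \<in> E1 \<longleftrightarrow> {x, y} \<in> E2)"
  shows "Score V E1 - B \<subseteq> Score V E2"
proof -
  define S1 where "S1 = Score V E1"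
  define S2 where "S2 = Score V E2"
  define X where "X = (S1 - B) \<union> S2"
  have S1V: "S1 \<subseteq> V" and S2V: "S2 \<subseteq> V" using score_V S1_def S2_def by metis+
  have "strong4 V E2 X"
    unfolding strong4_def
  proof (intro conjI ballI)
    show "X \<subseteq> V" using S1V S2V X_def by blast
    fix x assume xX: "x \<in> X \<union> nbhd V E2 X"
    have xV: "x \<in> V" using xX \<open>X \<subseteq> V\<close> by (auto simp: nbhd_mem)
    have f: "finite (nbhdv V E2 x \<inter> X)"
      using fin \<open>X \<subseteq> V\<close> by (meson finite_subset inf_le2)
    show "4 \<le> card (nbhdv V E2 x \<inter> X)"
    proof (cases "x \<in> S2 \<union> nbhd V E2 S2")
      case True
      have "4 \<le> card (nbhdv V E2 x \<inter> S2)" using score_prop[OF fin] True S2_def by blast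
      also have "\<dots> \<le> card (nbhdv V E2 x \<inter> X)"
        using f by (intro card_mono) (auto simp: X_def)
      finally show ?thesis .
    next
      case False
      have xA: "x \<notin> A" using False A2 S2_def by blast
      show ?thesis
      proof (cases "x \<in> B")
        case True
        then obtain y where y: "y \<in> X" "{x, y} \<in> E2" "x \<notin> X"
          using xX False True by (auto simp: nbhd_mem X_def)
        show ?thesis
        proof (cases "y \<in> S2")
          case True
          then have "x \<in> nbhd V E2 S2" using y xV False by (auto simp: nbhd_mem)
          then show ?thesis using False by blast
        next
          case yS2: False
          then have "y \<in> V" "y \<notin> B" using y X_def S1V by auto
          then have "y \<in> nbhd V E2 B" using True y
            by (auto simp: nbhd_mem insert_commute)
          then have "y \<in> S2" using N2 A2 S2_def by blast
          then show ?thesis using yS2 by blast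
        qed
      next
        case xB: False
        have xAB: "x \<notin> A \<union> B" using xA xB by blast
        have xS1: "x \<in> S1 \<union> nbhd V E1 S1"
        proof (cases "x \<in> X")
          case True then show ?thesis using False X_def by blast
        next
          case notX: False
          then obtain y where y: "y \<in> X" "{x, y} \<in> E2"
            using xX notX by (auto simp: nbhd_mem)
          have "y \<notin> S2" using y False xV notX by (auto simp: nbhd_mem X_def)
          then have "y \<in> S1" using y X_def by blast
          moreover have "{x, y} \<in> E1" using D[OF xAB] y by blast
          moreover have "x \<notin> S1" using notX xB X_def by blast
          ultimately show ?thesis using xV by (auto simp: nbhd_mem)
        qed
        have "4 \<le> card (nbhdv V E1 x \<inter> S1)" using score_prop[OF fin] xS1 S1_def by blast
        also have "\<dots> \<le> card (nbhdv V E2 x \<inter> X)"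
        proof (rule card_mono[OF f], rule subsetI)
          fix v assume v: "v \<in> nbhdv V E1 x \<inter> S1"
          then have v1: "v \<in> V" "v \<noteq> x" "{v, x} \<in> E1" by (auto simp: nbhdv_mem)
          have e2: "{v, x} \<in> E2" using D[OF xAB, of v] v1 by (metis insert_commute)
          have "v \<notin> B"
          proof
            assume "v \<in> B"
            then have "x \<in> nbhd V E1 B" using xV xB v1
              by (auto simp: nbhd_mem insert_commute)
            then show False using N1 xA by blast
          qed
          then show "v \<in> nbhdv V E2 x \<inter> X" using v v1 e2 by (auto simp: nbhdv_mem X_def)
        qed
        finally show ?thesis .
      qed
    qed
  qed
  then show ?thesis using score_sub X_def S1_def S2_def by blast
qed


lemma P_half:
  assumes A1: "A \<subseteq> Score V E1"
    and N1: "nbhd V E1 B \<subseteq> A"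
    and D: "\<And>x y. x \<notin> A \<union> B \<Longrightarrow> ({x, y} \<in> E1 \<longleftrightarrow> {x, y} \<in> E2)"
    and SB: "Score V E1 - B = Score V E2 - B"
  shows "Pset V E1 - B \<subseteq> Pset V E2"
proof
  fix x assume x: "x \<in> Pset V E1 - B"
  then obtain y where y: "x \<in> V" "x \<notin> Score V E1" "y \<in> Score V E1" "{x, y} \<in> E1" "x \<notin> B"
    by (auto simp: Pset_def nbhd_mem)
  have xA: "x \<notin> A" using y A1 by blast
  have yB: "y \<notin> B"
  proof
    assume "y \<in> B"
    then have "x \<in> nbhd V E1 B" using y by (auto simp: nbhd_mem)
    then show False using N1 xA by blast
  qed
  have "y \<in> Score V E2" using SB y yB by blast
  moreover have "{x, y} \<in> E2" using D[of x y] xA y by blast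
  moreover have "x \<notin> Score V E2" using SB y by blast
  ultimately show "x \<in> Pset V E2" using y by (auto simp: Pset_def nbhd_mem)
qed

lemma comp_half:
  assumes AU1: "A \<inter> U1 = {}" and U1V: "U1 \<subseteq> V"
    and N1: "nbhd V E1 B \<subseteq> A"
    and D: "\<And>x y. x \<notin> A \<union> B \<Longrightarrow> ({x, y} \<in> E1 \<longleftrightarrow> {x, y} \<in> E2)"
    and UB: "U1 - B = U2 - B"
    and r: "(adj_in E1 U1)\<^sup>*\<^sup>* w v" and w: "w \<in> U1 - B"
  shows "(adj_in E2 U2)\<^sup>*\<^sup>* w v \<and> v \<in> U1 - B"
  using r
proof (induction rule: rtranclp_induct)
  case base
  then show ?case using w by simp
next
  case (step u v)
  have u: "u \<in> U1" "u \<notin> B" "u \<notin> A" using step AU1 by auto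
  have a: "v \<in> U1" "{u, v} \<in> E1" using step(2) by (auto simp: adj_in_def)
  have vB: "v \<notin> B"
  proof
    assume "v \<in> B"
    then have "u \<in> nbhd V E1 B" using u a U1V by (auto simp: nbhd_mem)
    then show False using N1 u by blast
  qed
  have "{u, v} \<in> E2" using D[of u v] u a by blast
  moreover have "u \<in> U2" "v \<in> U2" using UB u a vB by blast+
  ultimately have "adj_in E2 U2 u v" by (simp add: adj_in_def)
  then show ?case using step vB a by (meson DiffI rtranclp.rtrancl_into_rtrancl)
qed

theorem lemma4p5:
  fixes V :: "'a set" and E1 E2 :: "'a set set" and A B :: "'a set"
  assumes "graph V E1" and "graph V E2"
    and "A \<subseteq> Score V E1 \<inter> Score V E2"
    and "B \<subseteq> V"
    and "nbhd V E1 B \<union> nbhd V E2 B \<subseteq> A"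
    and "(E1 - E2) \<union> (E2 - E1) \<subseteq> {e. e \<subseteq> A \<union> B \<and> card e = 2}"
  shows "Score V E1 - B = Score V E2 - B
    \<and> Pset V E1 - B = Pset V E2 - B
    \<and> Rset V E1 - B = Rset V E2 - B
    \<and> (\<forall>w \<in> V - B. Comp V E1 w = Comp V E2 w
           \<and> Comp V E1 w \<subseteq> V - (A \<union> B)
           \<and> induced E1 (Comp V E1 w) = induced E2 (Comp V E2 w)
           \<and> Rset V E1 \<inter> Comp V E1 w = Rset V E2 \<inter> Comp V E2 w)"
proof -
  have fin: "finite V" using assms(1) by (simp add: graph_def)
  have A1: "A \<subseteq> Score V E1" and A2: "A \<subseteq> Score V E2" using assms(3) by auto
  have N1: "nbhd V E1 B \<subseteq> A" and N2: "nbhd V E2 B \<subseteq> A" using assms(5) by auto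
  have De: "e \<in> E1 \<longleftrightarrow> e \<in> E2" if "\<not> e \<subseteq> A \<union> B" for e
    using assms(6) that by blast
  have D: "{x, y} \<in> E1 \<longleftrightarrow> {x, y} \<in> E2" if "x \<notin> A \<union> B" for x y
    using De[of "{x, y}"] that by blast
  have D': "{x, y} \<in> E2 \<longleftrightarrow> {x, y} \<in> E1" if "x \<notin> A \<union> B" for x y
    using D that by blast
  have SB: "Score V E1 - B = Score V E2 - B"
    using core_half[OF fin A1 A2 N1 N2 D] core_half[OF fin A2 A1 N2 N1 D'] by blast
  have PB: "Pset V E1 - B = Pset V E2 - B"
    using P_half[OF A1 N1 D SB] P_half[OF A2 N2 D' SB[symmetric]] by blast
  have RB: "Rset V E1 - B = Rset V E2 - B"
    using SB PB unfolding Rset_def by blast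
  define U1 where "U1 = Pset V E1 \<union> Rset V E1"
  define U2 where "U2 = Pset V E2 \<union> Rset V E2"
  have U1V: "U1 \<subseteq> V" and U2V: "U2 \<subseteq> V"
    unfolding U1_def U2_def Rset_def Pset_def nbhd_def by auto
  have AU1: "A \<inter> U1 = {}" using A1 unfolding U1_def Rset_def Pset_def nbhd_def by auto
  have AU2: "A \<inter> U2 = {}" using A2 unfolding U2_def Rset_def Pset_def nbhd_def by auto
  have UB: "U1 - B = U2 - B" using PB RB unfolding U1_def U2_def by blast
  have C1: "Comp V E1 w = (if w \<in> U1 then {v. (adj_in E1 U1)\<^sup>*\<^sup>* w v} else {})" for w
    by (simp add: Comp_def U1_def)
  have C2: "Comp V E2 w = (if w \<in> U2 then {v. (adj_in E2 U2)\<^sup>*\<^sup>* w v} else {})" for w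
    by (simp add: Comp_def U2_def)
  have W: "Comp V E1 w = Comp V E2 w \<and> Comp V E1 w \<subseteq> V - (A \<union> B)
           \<and> induced E1 (Comp V E1 w) = induced E2 (Comp V E2 w)
           \<and> Rset V E1 \<inter> Comp V E1 w = Rset V E2 \<inter> Comp V E2 w" if w: "w \<in> V - B" for w
  proof -
    have eq: "Comp V E1 w = Comp V E2 w"
    proof (cases "w \<in> U1")
      case True
      then have w1: "w \<in> U1 - B" and w2: "w \<in> U2 - B" using w UB by auto
      have "{v. (adj_in E1 U1)\<^sup>*\<^sup>* w v} = {v. (adj_in E2 U2)\<^sup>*\<^sup>* w v}"
        using comp_half[OF AU1 U1V N1 D UB _ w1] comp_half[OF AU2 U2V N2 D' UB[symmetric] _ w2]
        by blast
      then show ?thesis using C1 C2 True w2 by simp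
    next
      case False
      then have "w \<notin> U2" using w UB by blast
      then show ?thesis using C1 C2 False by simp
    qed
    have sub: "Comp V E1 w \<subseteq> V - (A \<union> B)"
    proof
      fix v assume v: "v \<in> Comp V E1 w"
      then have wU: "w \<in> U1" using C1 by (auto split: if_splits)
      then have "(adj_in E1 U1)\<^sup>*\<^sup>* w v" using v C1 by simp
      then have "v \<in> U1 - B" using comp_half[OF AU1 U1V N1 D UB _] wU w by blast
      then show "v \<in> V - (A \<union> B)" using U1V AU1 by blast
    qed
    have ind: "induced E1 (Comp V E1 w) = induced E2 (Comp V E2 w)"
    proof -
      have "e \<in> E1 \<longleftrightarrow> e \<in> E2" if "e \<subseteq> Comp V E1 w" for e
      proof (cases "e = {}")
        case True
        then show ?thesis using assms(1,2) by (auto simp: graph_def)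
      next
        case False
        then have "\<not> e \<subseteq> A \<union> B" using that sub by blast
        then show ?thesis using De by blast
      qed
      then show ?thesis using eq unfolding induced_def by blast
    qed
    have "Rset V E1 \<inter> Comp V E1 w = Rset V E2 \<inter> Comp V E2 w"
      using RB eq sub by blast
    then show ?thesis using eq sub ind by blast
  qed
  show ?thesis using SB PB RB W by blast
qed

end
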